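(* Let $m$ be a positive integer, $q=3^m$, $n=q-1$, and let $e$ be an integer with $1<e<q-1$, $e\notin C_1$ and $\ell_e=|C_e|=m$. Then the ternary cyclic code $\mathcal{C}_{(1,e)}$ has parameters $[3^m-1,\,3^m-1-2m,\,4]$ if and only if all of the following hold: (C1) $e$ is even; (C2) the equation $(x+1)^e+x^e+1=0$ has the only solution $x=1$ in $\mathrm{GF}(q)^*$; (C3) the equation $(x+1)^e-x^e-1=0$ has the only solution $x=0$ in $\mathrm{GF}(q)$.
   Context: For $j\in\mathbb{Z}_n$, $C_j=\{j,3j,3^2j,\dots,3^{\ell_j-1}j\}$ (mod $n$) is the $3$-cyclotomic coset modulo $n=3^m-1$ containing $j$, with $\ell_j$ the smallest positive integer such that $3^{\ell_j}j\equiv j\pmod n$. Let $\alpha$ be a generator of $\mathrm{GF}(q)^*$ and $m_a(x)$ the minimal polynomial of $a\in\mathrm{GF}(q)$ over $\mathrm{GF}(3)$. For $1<e<q-1$ with $e\notin C_1$, $\mathcal{C}_{(1,e)}$ denotes the cyclic code of length $n$ over $\mathrm{GF}(3)$ with generator polynomial $m_{\alpha}(x)m_{\alpha^e}(x)$. A code with parameters $[n,k,d]$ has length $n$, dimension $k$ and minimum Hamming distance $d$. *)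

theory Defs
  imports "HOL-Computational_Algebra.Polynomial"
begin

definition prime_subfield :: "'a::field set" where
  "prime_subfield = range (of_int :: int \<Rightarrow> 'a)"

definition cyc_coset :: "nat \<Rightarrow> nat \<Rightarrow> nat set" where
  "cyc_coset n j = {(j * 3 ^ i) mod n | i. True}"

definition over_gf3 :: "'a::field poly \<Rightarrow> bool" where
  "over_gf3 p \<longleftrightarrow> (\<forall>i. coeff p i \<in> prime_subfield)"

definition min_poly3 :: "'a::{field,finite} \<Rightarrow> 'a poly" where
  "min_poly3 a = (THE p. over_gf3 p \<and> lead_coeff p = 1 \<and> poly p a = 0 \<and>
      (\<forall>r. over_gf3 r \<and> r \<noteq> 0 \<and> poly r a = 0 \<longrightarrow> degree p \<le> degree r))"

text \<open>Cyclic code of length n over GF(3) with generator polynomial g: codewords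
  c_0 + c_1 x + ... + c_{n-1} x^{n-1} (identified with polynomials of degree < n
  with coefficients in GF(3)) that are multiples of g.\<close>
definition cyclic_code3 :: "nat \<Rightarrow> 'a::field poly \<Rightarrow> 'a poly set" where
  "cyclic_code3 n g = {c. over_gf3 c \<and> degree c < n \<and> g dvd c}"

definition hamming_weight :: "'a::zero poly \<Rightarrow> nat" where
  "hamming_weight c = card {i. coeff c i \<noteq> 0}"

text \<open>A ternary linear code C of length n has parameters [n,k,d]: it has 3^k codewords
  (dimension k over GF(3)) and its minimum distance, the minimum weight of a nonzero
  codeword, is d.\<close>
definition has_params3 :: "'a::field poly set \<Rightarrow> nat \<Rightarrow> nat \<Rightarrow> nat \<Rightarrow> nat \<Rightarrow> bool" where
  "has_params3 C len n k d \<longleftrightarrow> len = n \<and> card C = 3 ^ k \<and>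
      Min {hamming_weight c | c. c \<in> C \<and> c \<noteq> 0} = d"

end

theory Submission
  imports Defs "HOL-Library.FuncSet"
begin

lemma card_mult_zero:
  fixes x :: "'a::{field,finite}"
  shows "of_nat (card (UNIV::'a set)) * x = 0"
proof -
  have "(\<Sum>y\<in>UNIV. x + y) = (\<Sum>y\<in>(UNIV::'a set). y)"
    by (rule sum.reindex_bij_witness[where i="\<lambda>y. y - x" and j="\<lambda>y. x + y"]) auto
  moreover have "(\<Sum>y\<in>UNIV. x + y) = of_nat (card (UNIV::'a set)) * x + (\<Sum>y\<in>(UNIV::'a set). y)"
    by (simp add: sum.distrib)
  ultimately show ?thesis by simp
qed

locale char3 =
  fixes dummy :: "'a::{field,finite}"
  assumes three: "(3::'a::{field,finite}) = 0"
begin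

lemma two_eq: "(2::'a) = -1"
  using three by (simp add: eq_neg_iff_add_eq_0)

lemma two_ne: "(2::'a) \<noteq> 0"
proof
  assume "(2::'a) = 0"
  then have "(3::'a) - 2 = 0" using three by simp
  then show False by simp
qed

lemma m1_ne_1: "(-1::'a) \<noteq> 1"
proof
  assume h: "(-1::'a) = 1"
  have "(2::'a) = 1 + 1" by simp
  also have "\<dots> = 1 + - 1" using h by simp
  also have "\<dots> = 0" by simp
  finally show False using two_ne by simp
qed

lemma cube_add: "((x::'a) + y) ^ 3 = x ^ 3 + y ^ 3"
proof -
  have "(x + y) ^ 3 = x ^ 3 + y ^ 3 + 3 * (x^2*y + x*y^2)"
    by (simp add: power3_eq_cube power2_eq_square algebra_simps)
  then show ?thesis using three by simp
qed

lemma cube_neg: "(- (x::'a)) ^ 3 = - (x ^ 3)"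
  by (simp add: power3_eq_cube)

lemma cube_diff: "((x::'a) - y) ^ 3 = x ^ 3 - y ^ 3"
  using cube_add[of x "-y"] cube_neg[of y] by simp

lemma cube_sum: "finite A \<Longrightarrow> (\<Sum>i\<in>A. f i) ^ 3 = (\<Sum>i\<in>A. (f i :: 'a) ^ 3)"
  by (induction A rule: finite_induct) (simp_all add: cube_add)

lemma cube_inj: "(x::'a) ^ 3 = y ^ 3 \<Longrightarrow> x = y"
  using cube_diff[of x y] by simp

lemma cube_id_iff: "(c::'a) ^ 3 = c \<longleftrightarrow> c = 0 \<or> c = 1 \<or> c = -1"
proof -
  have "c ^ 3 - c = c * (c - 1) * (c + 1)"
    by (simp add: power3_eq_cube algebra_simps)
  then have "c ^ 3 = c \<longleftrightarrow> c * (c - 1) * (c + 1) = 0" by (simp add: eq_iff_diff_eq_0[of "c^3"])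
  also have "\<dots> \<longleftrightarrow> c = 0 \<or> c = 1 \<or> c = -1"
    by (auto simp: eq_neg_iff_add_eq_0)
  finally show ?thesis .
qed

lemma of_int_mod3: "(of_int k :: 'a) = of_int (k mod 3)"
proof -
  have "k = 3 * (k div 3) + k mod 3" by simp
  then have "(of_int k :: 'a) = of_int 3 * of_int (k div 3) + of_int (k mod 3)"
    by (metis of_int_add of_int_mult)
  then show ?thesis using three by simp
qed

lemma subfield_iff: "(c::'a) \<in> prime_subfield \<longleftrightarrow> c = 0 \<or> c = 1 \<or> c = -1"
proof
  assume "c \<in> prime_subfield"
  then obtain k where k: "c = of_int k" by (auto simp: prime_subfield_def)
  have "k mod 3 \<in> {0,1,2}" by auto
  then show "c = 0 \<or> c = 1 \<or> c = -1"
    using k of_int_mod3[of k] two_eq by auto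
next
  assume "c = 0 \<or> c = 1 \<or> c = -1"
  moreover have "(0::'a) \<in> range of_int" by (rule range_eqI[where x=0]) simp
  moreover have "(1::'a) \<in> range of_int" by (rule range_eqI[where x=1]) simp
  moreover have "(-1::'a) \<in> range of_int" by (rule range_eqI[where x="-1"]) simp
  ultimately show "c \<in> prime_subfield" unfolding prime_subfield_def by blast
qed

lemma subfield_cube: "(c::'a) \<in> prime_subfield \<longleftrightarrow> c ^ 3 = c"
  using subfield_iff cube_id_iff by blast

lemma over_gf3_cube: "over_gf3 (p::'a poly) \<longleftrightarrow> (\<forall>i. coeff p i ^ 3 = coeff p i)"
  unfolding over_gf3_def subfield_cube ..

lemma subfield_diff: "a \<in> prime_subfield \<Longrightarrow> b \<in> prime_subfield \<Longrightarrow> (a::'a) - b \<in> prime_subfield"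
  unfolding prime_subfield_def
proof -
  assume "a \<in> range of_int" "b \<in> range of_int"
  then obtain i j where "a = of_int i" "b = of_int j" by blast
  then have "a - b = of_int (i - j)" by simp
  then show "a - b \<in> range of_int" by blast
qed

lemma subfield_add: "a \<in> prime_subfield \<Longrightarrow> b \<in> prime_subfield \<Longrightarrow> (a::'a) + b \<in> prime_subfield"
  unfolding prime_subfield_def
proof -
  assume "a \<in> range of_int" "b \<in> range of_int"
  then obtain i j where "a = of_int i" "b = of_int j" by blast
  then have "a + b = of_int (i + j)" by simp
  then show "a + b \<in> range of_int" by blast
qed

lemma poly_frob:
  assumes "over_gf3 r"
  shows "poly r ((x::'a) ^ 3) = (poly r x) ^ 3"
proof -
  have "(poly r x) ^ 3 = (\<Sum>i\<le>degree r. (coeff r i * x ^ i) ^ 3)"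
    by (simp add: poly_altdef cube_sum)
  also have "\<dots> = (\<Sum>i\<le>degree r. coeff r i * (x ^ 3) ^ i)"
    using assms unfolding over_gf3_cube
    by (intro sum.cong refl) (simp add: power_mult_distrib power_mult[symmetric] mult.commute)
  finally show ?thesis by (simp add: poly_altdef)
qed

definition orb :: "'a \<Rightarrow> 'a set" where
  "orb b = range (\<lambda>i. b ^ (3 ^ i))"

lemma orb_finite: "finite (orb b)" by simp

lemma in_orb: "b \<in> orb b"
  unfolding orb_def by (rule range_eqI[where x=0]) simp

lemma orb_root:
  assumes "over_gf3 r" "poly r b = 0" "g \<in> orb b"
  shows "poly r g = 0"
proof -
  obtain i where g: "g = b ^ (3 ^ i)" using assms(3) by (auto simp: orb_def)
  have "poly r (b ^ (3 ^ i)) = 0" for i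
  proof (induction i)
    case 0 then show ?case using assms by simp
  next
    case (Suc i)
    have "b ^ (3 ^ Suc i) = (b ^ (3 ^ i)) ^ 3" by (simp add: power_mult[symmetric] mult.commute)
    then show ?case using poly_frob[OF assms(1)] Suc by simp
  qed
  then show ?thesis using g by simp
qed

lemma orb_cube: "(\<lambda>x. x ^ 3) ` orb b = orb b"
proof -
  have sub: "(\<lambda>x. x ^ 3) ` orb b \<subseteq> orb b"
  proof
    fix y assume "y \<in> (\<lambda>x. x ^ 3) ` orb b"
    then obtain i where "y = (b ^ (3 ^ i)) ^ 3" by (auto simp: orb_def)
    also have "\<dots> = b ^ (3 ^ Suc i)" by (simp add: power_mult[symmetric] mult.commute)
    finally show "y \<in> orb b" unfolding orb_def by (rule range_eqI)
  qed
  have "inj_on (\<lambda>x. x ^ 3) (orb b)" by (meson cube_inj inj_onI)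
  then have "card ((\<lambda>x. x ^ 3) ` orb b) = card (orb b)" by (simp add: card_image)
  then show ?thesis using sub by (simp add: card_subset_eq)
qed

definition linprod :: "'a set \<Rightarrow> 'a poly" where
  "linprod S = (\<Prod>g\<in>S. [:-g, 1:])"

lemma linprod_degree: "finite S \<Longrightarrow> degree (linprod S) = card S"
  unfolding linprod_def by (subst degree_prod_eq_sum_degree) auto

lemma linprod_monic: "lead_coeff (linprod S) = 1"
  unfolding linprod_def lead_coeff_prod by simp

lemma linprod_nz: "linprod S \<noteq> 0"
proof
  assume "linprod S = 0"
  then have "lead_coeff (linprod S) = 0" by simp
  with linprod_monic show False by simp
qed

lemma linprod_dvd:
  "finite S \<Longrightarrow> (\<forall>g\<in>S. poly p g = 0) \<Longrightarrow> linprod S dvd p"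
proof (induction S arbitrary: p rule: finite_induct)
  case empty then show ?case by (simp add: linprod_def)
next
  case (insert a S)
  then have "[:-a, 1:] dvd p" by (simp add: poly_eq_0_iff_dvd)
  then obtain q where q: "p = [:-a, 1:] * q" by (auto elim: dvdE)
  have "\<forall>g\<in>S. poly q g = 0"
  proof
    fix g assume "g \<in> S"
    then have "g \<noteq> a" "poly p g = 0" using insert by auto
    then show "poly q g = 0" using q by simp
  qed
  then have "linprod S dvd q" using insert by blast
  then have d: "[:-a, 1:] * linprod S dvd [:-a, 1:] * q" by (rule mult_dvd_mono[OF dvd_refl])
  have "linprod (insert a S) = [:-a, 1:] * linprod S" using insert by (simp add: linprod_def)
  then show ?case using d q by metis
qed

lemma linprod_roots: "finite S \<Longrightarrow> g \<in> S \<Longrightarrow> poly (linprod S) g = 0"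
  unfolding linprod_def by (simp add: poly_prod)

lemma linprod_dvd_iff:
  assumes fin: "finite S"
  shows "linprod S dvd p \<longleftrightarrow> (\<forall>g\<in>S. poly p g = 0)"
proof
  assume "linprod S dvd p"
  then obtain k where k: "p = linprod S * k" by (auto elim: dvdE)
  show "\<forall>g\<in>S. poly p g = 0" using k linprod_roots[OF fin] by simp
qed (rule linprod_dvd[OF fin])

definition frobp :: "'a poly \<Rightarrow> 'a poly" where
  "frobp p = map_poly (\<lambda>c. c ^ 3) p"

lemma coeff_frobp: "coeff (frobp p) i = coeff p i ^ 3"
  unfolding frobp_def by (simp add: coeff_map_poly)

lemma frobp_mult: "frobp (p * q) = frobp p * frobp q"
proof (rule poly_eqI)
  fix n
  show "coeff (frobp (p * q)) n = coeff (frobp p * frobp q) n"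
    by (simp add: coeff_frobp coeff_mult cube_sum power_mult_distrib)
qed

lemma frobp_one: "frobp 1 = 1"
  by (simp add: frobp_def)

lemma frobp_prod: "frobp (\<Prod>x\<in>A. f x) = (\<Prod>x\<in>A. frobp (f x))"
  by (induction A rule: infinite_finite_induct) (simp_all add: frobp_one frobp_mult)

lemma frobp_lin: "frobp [:-g, 1:] = [:-(g^3), 1:]"
  by (rule poly_eqI) (auto simp: coeff_frobp coeff_pCons cube_neg split: nat.splits)

lemma linprod_orb_gf3: "over_gf3 (linprod (orb b))"
proof -
  have "frobp (linprod (orb b)) = (\<Prod>g\<in>orb b. [:-(g^3), 1:])"
    unfolding linprod_def frobp_prod frobp_lin ..
  also have "\<dots> = (\<Prod>g\<in>(\<lambda>x. x^3) ` orb b. [:-g, 1:])"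
    by (subst prod.reindex) (auto intro: inj_onI cube_inj)
  also have "\<dots> = linprod (orb b)" by (simp add: orb_cube linprod_def)
  finally have "frobp (linprod (orb b)) = linprod (orb b)" .
  then show ?thesis unfolding over_gf3_cube
    by (simp add: poly_eq_iff coeff_frobp)
qed

lemma min_poly3_eq: "min_poly3 (b::'a) = linprod (orb b)"
  unfolding min_poly3_def
proof (rule the_equality)
  let ?P = "linprod (orb b)"
  show "over_gf3 ?P \<and> lead_coeff ?P = 1 \<and> poly ?P b = 0 \<and>
    (\<forall>r. over_gf3 r \<and> r \<noteq> 0 \<and> poly r b = 0 \<longrightarrow> degree ?P \<le> degree r)"
  proof (intro conjI allI impI)
    show "over_gf3 ?P" by (rule linprod_orb_gf3)
    show "lead_coeff ?P = 1" by (rule linprod_monic)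
    show "poly ?P b = 0" by (simp add: linprod_roots in_orb)
    fix r assume r: "over_gf3 r \<and> r \<noteq> 0 \<and> poly r b = 0"
    then have "?P dvd r" using orb_root by (auto simp: linprod_dvd_iff)
    then show "degree ?P \<le> degree r" using r by (simp add: dvd_imp_degree_le)
  qed
  fix p assume p: "over_gf3 p \<and> lead_coeff p = 1 \<and> poly p b = 0 \<and>
    (\<forall>r. over_gf3 r \<and> r \<noteq> 0 \<and> poly r b = 0 \<longrightarrow> degree p \<le> degree r)"
  then have pnz: "p \<noteq> 0" by auto
  have "?P dvd p" using p orb_root by (auto simp: linprod_dvd_iff)
  then obtain k where k: "p = ?P * k" by (auto elim: dvdE)
  have "degree p \<le> degree ?P" using p linprod_orb_gf3 linprod_nz
    by (simp add: linprod_roots in_orb)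
  then have "degree k = 0" using k pnz linprod_nz by (simp add: degree_mult_eq)
  moreover have "lead_coeff k = 1" using k p linprod_monic by (simp add: lead_coeff_mult)
  ultimately have "k = 1" by (auto elim!: degree_eq_zeroE)
  then show "p = ?P" using k by simp
qed

end

locale tern = char3 \<alpha> for \<alpha> :: "'a::{field,finite}" +
  fixes m e :: nat
  assumes m_pos: "m > 0"
    and card_q: "card (UNIV :: 'a set) = 3 ^ m"
    and gen0: "\<alpha> \<noteq> 0" and gen: "(\<lambda>i. \<alpha> ^ i) ` {..<3 ^ m - 1} = UNIV - {0}"
    and e_range1: "1 < e" and e_range2: "e < 3 ^ m - 1"
    and e_notin: "e \<notin> cyc_coset (3 ^ m - 1) 1"
    and e_len: "card (cyc_coset (3 ^ m - 1) e) = m"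
begin

definition n :: nat where "n = 3 ^ m - 1"

lemma gen': "(\<lambda>i. \<alpha> ^ i) ` {..<n} = UNIV - {0}" using gen by (simp add: n_def)
lemma e_range2': "e < n" using e_range2 by (simp add: n_def)
lemma e_notin': "e \<notin> cyc_coset n 1" using e_notin by (simp add: n_def)
lemma e_len': "card (cyc_coset n e) = m" using e_len by (simp add: n_def)
lemma pow_n: "(3::nat) ^ m = n + 1"
proof -
  have "(1::nat) \<le> 3 ^ m" by simp
  then show ?thesis by (simp add: n_def)
qed

lemma n_ge3: "n \<ge> 3" using e_range1 e_range2' by simp

lemma m_ge2: "m \<ge> 2"
proof (rule ccontr)
  assume "\<not> m \<ge> 2"
  then have "m = 1" using m_pos by simp
  then show False using n_ge3 pow_n by simp
qed

lemma n_ge8: "n \<ge> 8"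
proof -
  have "(3::nat) ^ 2 \<le> 3 ^ m" using m_ge2 by (rule power_increasing) simp
  then show ?thesis using pow_n by simp
qed

lemma card_nz: "card (UNIV - {0::'a}) = n"
  using card_q by (simp add: card_Diff_singleton n_def)

lemma inj_alpha: "inj_on (\<lambda>i. \<alpha> ^ i) {..<n}"
proof -
  have "card ((\<lambda>i. \<alpha> ^ i) ` {..<n}) = card (UNIV - {0::'a})" using gen' by simp
  also have "\<dots> = n" by (rule card_nz)
  finally show ?thesis by (intro eq_card_imp_inj_on) simp_all
qed

lemma nonzero_alpha: "x \<noteq> 0 \<Longrightarrow> \<exists>i<n. x = \<alpha> ^ i"
proof -
  assume "x \<noteq> 0"
  then have "x \<in> (\<lambda>i. \<alpha> ^ i) ` {..<n}" using gen' by simp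
  then show ?thesis by auto
qed

lemma alpha_n: "\<alpha> ^ n = 1"
proof -
  have "\<alpha> ^ n \<noteq> 0" using gen0 by simp
  then obtain k where k: "k < n" "\<alpha> ^ n = \<alpha> ^ k" using nonzero_alpha by blast
  show ?thesis
  proof (cases "k = 0")
    case True then show ?thesis using k by simp
  next
    case False
    have "\<alpha> ^ (n - k) * \<alpha> ^ k = \<alpha> ^ n" using k by (simp add: power_add[symmetric])
    then have "\<alpha> ^ (n - k) * \<alpha> ^ k = 1 * \<alpha> ^ k" using k by simp
    then have "\<alpha> ^ (n - k) = \<alpha> ^ 0" using gen0 by simp
    moreover have "n - k < n" "0 < n" using k False by auto
    ultimately have "n - k = 0" using inj_alpha unfolding inj_on_def by blast
    then show ?thesis using k by simp
  qed
qed

lemma alpha_mod: "\<alpha> ^ k = \<alpha> ^ (k mod n)"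
proof -
  have "\<alpha> ^ k = \<alpha> ^ (n * (k div n) + k mod n)" by simp
  also have "\<dots> = (\<alpha> ^ n) ^ (k div n) * \<alpha> ^ (k mod n)" by (simp only: power_add power_mult)
  finally show ?thesis using alpha_n by simp
qed

lemma alpha_eq_iff: "\<alpha> ^ i = \<alpha> ^ j \<longleftrightarrow> i mod n = j mod n"
proof
  assume "\<alpha> ^ i = \<alpha> ^ j"
  then have "\<alpha> ^ (i mod n) = \<alpha> ^ (j mod n)" using alpha_mod[of i] alpha_mod[of j] by simp
  moreover have "i mod n < n" "j mod n < n" using n_ge3 by auto
  ultimately show "i mod n = j mod n" using inj_alpha unfolding inj_on_def by blast
next
  assume "i mod n = j mod n"
  then show "\<alpha> ^ i = \<alpha> ^ j" using alpha_mod[of i] alpha_mod[of j] by simp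
qed

lemma cyc_coset_alt: "cyc_coset n j = range (\<lambda>i. (j * 3 ^ i) mod n)"
  by (auto simp: cyc_coset_def)

lemma cyc_sub: "cyc_coset n j \<subseteq> {..<n}"
  unfolding cyc_coset_alt using n_ge3 by auto

lemma orb_alpha: "orb (\<alpha> ^ j) = (\<lambda>k. \<alpha> ^ k) ` cyc_coset n j"
proof -
  have "(\<lambda>i. (\<alpha> ^ j) ^ (3 ^ i)) = (\<lambda>i. \<alpha> ^ ((j * 3 ^ i) mod n))"
    by (rule ext) (simp add: power_mult[symmetric] alpha_mod[of "j * 3 ^ _"])
  then show ?thesis unfolding orb_def cyc_coset_alt image_image by (rule arg_cong)
qed

lemma card_orb_alpha: "card (orb (\<alpha> ^ j)) = card (cyc_coset n j)"
  unfolding orb_alpha using inj_on_subset[OF inj_alpha cyc_sub] by (simp add: card_image)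

lemma pow3m: "(3::nat) ^ m mod n = 1"
proof -
  have "(1 + n) mod n = 1 mod n" by (rule mod_add_self2)
  then show ?thesis using n_ge3 pow_n by simp
qed

lemma pow3_mod: "(3::nat) ^ i mod n = 3 ^ (i mod m) mod n"
proof -
  have "(3::nat) ^ i = (3 ^ m) ^ (i div m) * 3 ^ (i mod m)"
    by (simp add: power_mult[symmetric] power_add[symmetric])
  then have "(3::nat) ^ i mod n = ((3 ^ m) ^ (i div m) mod n) * 3 ^ (i mod m) mod n"
    by (simp add: mod_mult_left_eq)
  also have "((3::nat) ^ m) ^ (i div m) mod n = ((3 ^ m) mod n) ^ (i div m) mod n"
    by (simp add: power_mod)
  also have "\<dots> = 1" using pow3m n_ge3 by simp
  finally show ?thesis by simp
qed

lemma pow3_lt: "i < m \<Longrightarrow> (3::nat) ^ i < n"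
proof -
  assume "i < m"
  then have "(3::nat) ^ Suc i \<le> 3 ^ m" by (intro power_increasing) auto
  then have a: "3 * (3::nat) ^ i \<le> n + 1" using pow_n by simp
  have b: "(1::nat) \<le> 3 ^ i" by simp
  from a b show ?thesis by linarith
qed

lemma cyc1: "cyc_coset n 1 = (\<lambda>i. 3 ^ i) ` {..<m}"
proof -
  have "range (\<lambda>i. (3::nat) ^ i mod n) = (\<lambda>i. 3 ^ i) ` {..<m}"
  proof (intro equalityI subsetI)
    fix x assume "x \<in> range (\<lambda>i. (3::nat) ^ i mod n)"
    then obtain i where "x = 3 ^ i mod n" by blast
    then have "x = 3 ^ (i mod m)" using pow3_mod[of i] pow3_lt[of "i mod m"] m_pos by simp
    then show "x \<in> (\<lambda>i. 3 ^ i) ` {..<m}" using m_pos by auto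
  next
    fix x assume "x \<in> (\<lambda>i. (3::nat) ^ i) ` {..<m}"
    then obtain i where "i < m" "x = 3 ^ i" by blast
    then have "x = 3 ^ i mod n" using pow3_lt by simp
    then show "x \<in> range (\<lambda>i. (3::nat) ^ i mod n)" by blast
  qed
  then show ?thesis unfolding cyc_coset_alt by simp
qed

lemma card_cyc1: "card (cyc_coset n 1) = m"
proof -
  have "inj_on (\<lambda>i. (3::nat) ^ i) {..<m}" by (auto intro: inj_onI)
  then show ?thesis unfolding cyc1 by (simp add: card_image)
qed

lemma card_orb1: "card (orb \<alpha>) = m"
  using card_orb_alpha[of 1] card_cyc1 by simp

lemma card_orbe: "card (orb (\<alpha> ^ e)) = m"
  using card_orb_alpha[of e] e_len' by simp

lemma orb_disj: "orb \<alpha> \<inter> orb (\<alpha> ^ e) = {}"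
proof (rule ccontr)
  assume "orb \<alpha> \<inter> orb (\<alpha> ^ e) \<noteq> {}"
  then obtain x where "x \<in> orb \<alpha>" "x \<in> orb (\<alpha> ^ e)" by blast
  then obtain i j where ij: "x = \<alpha> ^ (3 ^ i)" "x = (\<alpha> ^ e) ^ (3 ^ j)" unfolding orb_def by blast
  define s where "s = m * j - j"
  have js: "j + s = m * j" using m_pos by (simp add: s_def)
  have "x ^ (3 ^ s) = \<alpha> ^ (e * (3 ^ m) ^ j)"
    using ij(2) by (simp add: power_mult[symmetric] power_add[symmetric] js mult.assoc)
  also have "\<dots> = \<alpha> ^ e"
  proof -
    have "((3::nat) ^ m) ^ j mod n = ((3 ^ m) mod n) ^ j mod n" by (simp add: power_mod)
    also have "\<dots> = 1" using pow3m n_ge3 by simp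
    finally have "e * ((3::nat) ^ m) ^ j mod n = e mod n" by (metis mod_mult_right_eq mult.right_neutral)
    then show ?thesis by (simp add: alpha_eq_iff)
  qed
  finally have "\<alpha> ^ e = \<alpha> ^ (3 ^ (i + s))"
    using ij(1) by (simp add: power_mult[symmetric] power_add)
  then have "e mod n = (1 * 3 ^ (i + s)) mod n" by (simp add: alpha_eq_iff)
  then have "e \<in> cyc_coset n 1" using e_range2' unfolding cyc_coset_def by auto
  then show False using e_notin' by simp
qed

definition gpoly :: "'a poly" where
  "gpoly = min_poly3 \<alpha> * min_poly3 (\<alpha> ^ e)"

lemma gpoly_eq: "gpoly = linprod (orb \<alpha> \<union> orb (\<alpha> ^ e))"
  unfolding gpoly_def min_poly3_eq linprod_def
  using orb_disj by (simp add: prod.union_disjoint)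

lemma gpoly_degree: "degree gpoly = 2 * m"
  unfolding gpoly_eq using orb_disj card_orb1 card_orbe
  by (simp add: linprod_degree card_Un_disjoint)

lemma gpoly_gf3: "over_gf3 gpoly"
  unfolding gpoly_def min_poly3_eq over_gf3_def
proof
  fix i
  have "\<forall>k. coeff (linprod (orb \<alpha>)) k \<in> prime_subfield"
       "\<forall>k. coeff (linprod (orb (\<alpha> ^ e))) k \<in> prime_subfield"
    using linprod_orb_gf3 unfolding over_gf3_def by blast+
  then show "coeff (linprod (orb \<alpha>) * linprod (orb (\<alpha> ^ e))) i \<in> prime_subfield"
    unfolding subfield_cube coeff_mult cube_sum[OF finite_atMost] power_mult_distrib by simp
qed

lemma gpoly_monic: "lead_coeff gpoly = 1"
  unfolding gpoly_eq by (rule linprod_monic)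

lemma gpoly_nz: "gpoly \<noteq> 0"
  unfolding gpoly_eq by (rule linprod_nz)

lemma gpoly_dvd_iff:
  assumes "over_gf3 c"
  shows "gpoly dvd c \<longleftrightarrow> poly c \<alpha> = 0 \<and> poly c (\<alpha> ^ e) = 0"
  unfolding gpoly_eq
  using assms orb_root[OF assms] in_orb by (auto simp: linprod_dvd_iff)

lemma code_iff: "c \<in> cyclic_code3 n gpoly \<longleftrightarrow>
   over_gf3 c \<and> degree c < n \<and> poly c \<alpha> = 0 \<and> poly c (\<alpha> ^ e) = 0"
  unfolding cyclic_code3_def using gpoly_dvd_iff by auto

end

context char3
begin

lemma subfield_mult: "a \<in> prime_subfield \<Longrightarrow> b \<in> prime_subfield \<Longrightarrow> (a::'a) * b \<in> prime_subfield"
  unfolding subfield_cube by (simp add: power_mult_distrib)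

lemma over_gf3_mult: "over_gf3 p \<Longrightarrow> over_gf3 q \<Longrightarrow> over_gf3 ((p::'a poly) * q)"
  unfolding over_gf3_cube by (simp add: coeff_mult cube_sum power_mult_distrib)

lemma over_gf3_frobp: "over_gf3 (p::'a poly) \<longleftrightarrow> frobp p = p"
  unfolding over_gf3_cube by (simp add: poly_eq_iff coeff_frobp)

lemma over_gf3_cancel:
  assumes "over_gf3 (g::'a poly)" "g \<noteq> 0" "over_gf3 (g * h)"
  shows "over_gf3 h"
proof -
  have "g * frobp h = g * h"
    using assms frobp_mult[of g h] by (simp add: over_gf3_frobp)
  then have "frobp h = h" using assms(2) by simp
  then show ?thesis by (simp add: over_gf3_frobp)
qed

lemma over_gf3_diff: "over_gf3 p \<Longrightarrow> over_gf3 q \<Longrightarrow> over_gf3 ((p::'a poly) - q)"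
  unfolding over_gf3_def by (simp add: subfield_diff)

lemma over_gf3_add: "over_gf3 p \<Longrightarrow> over_gf3 q \<Longrightarrow> over_gf3 ((p::'a poly) + q)"
  unfolding over_gf3_def by (simp add: subfield_add)

lemma zero_in_sub: "(0::'a) \<in> prime_subfield" by (simp add: subfield_iff)

lemma over_gf3_monom: "(a::'a) \<in> prime_subfield \<Longrightarrow> over_gf3 (monom a i)"
  unfolding over_gf3_def by (simp add: coeff_monom zero_in_sub)

lemma card_subfield: "card (prime_subfield :: 'a set) = 3"
proof -
  have "prime_subfield = {0, 1, -1::'a}" using subfield_iff by auto
  moreover have "(-1::'a) \<noteq> 0" by simp
  have h1: "(1::'a) \<notin> {-1}" using m1_ne_1 two_ne by auto
  have h2: "(0::'a) \<notin> {1, -1}" by auto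
  have "card {1, -1::'a} = Suc (card {-1::'a})" by (rule card_insert_disjoint) (use two_ne in auto)
  moreover have "card {0, 1, -1::'a} = Suc (card {1, -1::'a})" by (rule card_insert_disjoint) (auto simp: h2)
  ultimately show ?thesis using \<open>prime_subfield = {0, 1, -1::'a}\<close> by simp
qed

lemma count_polys:
  assumes "k > 0"
  shows "card {h::'a poly. over_gf3 h \<and> degree h < k} = 3 ^ k"
proof -
  let ?H = "{h::'a poly. over_gf3 h \<and> degree h < k}"
  let ?f = "\<lambda>h. restrict (coeff h) {..<k}"
  have inj: "inj_on ?f ?H"
  proof (rule inj_onI)
    fix p q assume p: "p \<in> ?H" and q: "q \<in> ?H" and eq: "?f p = ?f q"
    show "p = q"
    proof (rule poly_eqI)
      fix i
      show "coeff p i = coeff q i"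
      proof (cases "i < k")
        case True then show ?thesis using fun_cong[OF eq, of i] by simp
      next
        case False then show ?thesis using p q by (simp add: coeff_eq_0)
      qed
    qed
  qed
  have img: "?f ` ?H = PiE {..<k} (\<lambda>_. prime_subfield :: 'a set)"
  proof (intro equalityI subsetI)
    fix F assume "F \<in> ?f ` ?H"
    then obtain h where "F = ?f h" "over_gf3 h" by blast
    then show "F \<in> PiE {..<k} (\<lambda>_. prime_subfield :: 'a set)"
      by (simp add: restrict_PiE_iff over_gf3_def)
  next
    fix F assume F: "F \<in> PiE {..<k} (\<lambda>_. prime_subfield :: 'a set)"
    define h where "h = Poly (map F [0..<k])"
    have ch: "coeff h i = (if i < k then F i else 0)" for i
      by (simp add: h_def nth_default_def)
    have "over_gf3 h" unfolding over_gf3_def ch using F zero_in_sub by auto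
    moreover have "degree h \<le> k - 1" by (rule degree_le) (use assms in \<open>auto simp: ch\<close>)
    ultimately have hH: "h \<in> ?H" using assms by simp
    have fh: "?f h = F"
    proof -
      have "?f h = restrict F {..<k}" by (rule restrict_ext) (simp add: ch)
      then show ?thesis using F by simp
    qed
    show "F \<in> ?f ` ?H" using hH fh by force
  qed
  have "card ?H = card (PiE {..<k} (\<lambda>_. prime_subfield :: 'a set))"
    using bij_betw_same_card[OF bij_betw_imageI[OF inj img]] .
  also have "\<dots> = 3 ^ k" by (simp add: card_PiE card_subfield)
  finally show ?thesis .
qed

end

lemma pow3_ge: "(3::nat) ^ k \<ge> 2 * k + 1"
proof (induction k)
  case (Suc k)
  have "(3::nat) ^ Suc k = 3 * 3 ^ k" by simp
  moreover have "2 * Suc k + 1 \<le> 3 * (2 * k + 1)" by simp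
  moreover have "3 * (2 * k + 1) \<le> 3 * (3::nat) ^ k" using Suc.IH by simp
  ultimately show ?case by linarith
qed simp

context tern
begin

lemma two_m_lt: "2 * m < n"
proof -
  have "(3::nat) ^ m = 3 * 3 ^ (m - 1)" using m_pos by (cases m) auto
  moreover have "(3::nat) ^ (m - 1) \<ge> 2 * (m - 1) + 1" by (rule pow3_ge)
  ultimately have "(3::nat) ^ m \<ge> 6 * m - 3" by simp
  then show ?thesis using pow_n m_ge2 by linarith
qed

abbreviation C where "C \<equiv> cyclic_code3 n gpoly"

lemma code_image: "C = (\<lambda>h. gpoly * h) ` {h. over_gf3 h \<and> degree h < n - 2 * m}"
proof (intro equalityI subsetI)
  fix c assume c: "c \<in> C"
  then have gc: "gpoly dvd c" "over_gf3 c" "degree c < n" by (auto simp: cyclic_code3_def)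
  then obtain h where h: "c = gpoly * h" by (auto elim: dvdE)
  have "over_gf3 h" using over_gf3_cancel[OF gpoly_gf3 gpoly_nz] gc h by simp
  moreover have "degree h < n - 2 * m"
  proof (cases "h = 0")
    case True then show ?thesis using two_m_lt by simp
  next
    case False
    then have "degree c = 2 * m + degree h" using h gpoly_nz by (simp add: degree_mult_eq gpoly_degree)
    then show ?thesis using gc by simp
  qed
  ultimately show "c \<in> (\<lambda>h. gpoly * h) ` {h. over_gf3 h \<and> degree h < n - 2 * m}" using h by blast
next
  fix c assume "c \<in> (\<lambda>h. gpoly * h) ` {h. over_gf3 h \<and> degree h < n - 2 * m}"
  then obtain h where h: "c = gpoly * h" "over_gf3 h" "degree h < n - 2 * m" by blast
  have "degree c < n"
  proof (cases "h = 0")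
    case True then show ?thesis using h two_m_lt by simp
  next
    case False
    then have "degree c = 2 * m + degree h" using h gpoly_nz by (simp add: degree_mult_eq gpoly_degree)
    then show ?thesis using h by simp
  qed
  then show "c \<in> C" using h over_gf3_mult[OF gpoly_gf3] by (simp add: cyclic_code3_def)
qed

lemma card_code: "card C = 3 ^ (n - 2 * m)"
proof -
  have "inj_on (\<lambda>h. gpoly * h) {h. over_gf3 h \<and> degree h < n - 2 * m}"
    using gpoly_nz by (auto intro: inj_onI)
  then have "card C = card {h::'a poly. over_gf3 h \<and> degree h < n - 2 * m}"
    unfolding code_image by (simp add: card_image)
  also have "\<dots> = 3 ^ (n - 2 * m)" using two_m_lt by (intro count_polys) simp
  finally show ?thesis .
qed

lemma code_finite: "finite C"
proof (rule ccontr)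
  assume "\<not> finite C"
  then have "card C = 0" by simp
  then show False using card_code by simp
qed

end

definition supp :: "'a::zero poly \<Rightarrow> nat set" where
  "supp c = {i. coeff c i \<noteq> 0}"

lemma supp_finite: "finite (supp c)"
proof -
  have "supp c \<subseteq> {..degree c}" by (auto simp: supp_def intro: le_degree)
  then show ?thesis by (rule finite_subset) simp
qed

lemma hw_supp: "hamming_weight c = card (supp c)"
  by (simp add: hamming_weight_def supp_def)

lemma poly_supp: "poly c x = (\<Sum>i\<in>supp c. coeff c i * x ^ i)" for c :: "'a::comm_ring_1 poly"
proof -
  have "poly c x = (\<Sum>i\<le>degree c. coeff c i * x ^ i)" by (rule poly_altdef)
  also have "\<dots> = (\<Sum>i\<in>supp c. coeff c i * x ^ i)"
    by (rule sum.mono_neutral_right) (auto simp: supp_def intro: le_degree)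
  finally show ?thesis .
qed

lemma supp_empty: "supp c = {} \<longleftrightarrow> c = 0"
  by (auto simp: supp_def poly_eq_iff)

context char3
begin

lemma sign: "a \<in> prime_subfield \<Longrightarrow> a \<noteq> 0 \<Longrightarrow> a = 1 \<or> a = (-1::'a)"
  using subfield_iff by auto

lemma sign_sq: "a = 1 \<or> a = (-1::'a) \<Longrightarrow> a * a = 1"
  by auto

lemma sign_mult: "a = 1 \<or> a = (-1::'a) \<Longrightarrow> b = 1 \<or> b = -1 \<Longrightarrow> a * b = 1 \<or> a * b = -1"
  by auto

lemma L3:
  fixes u v w :: 'a
  assumes "u \<noteq> 0" "v \<noteq> 0" "u + v - w = 0" "u ^ e + v ^ e - w ^ e = 0"
  shows "(u / v + 1) ^ e - (u / v) ^ e - 1 = 0" "u / v \<noteq> 0"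
proof -
  define x where "x = u / v"
  have u: "u = x * v" using assms by (simp add: x_def)
  have w: "w = (x + 1) * v" using assms(3) u by (simp add: algebra_simps)
  have "(x * v) ^ e + v ^ e - ((x + 1) * v) ^ e = 0" using assms(4) u w by simp
  moreover have "(x * v) ^ e + v ^ e - ((x + 1) * v) ^ e = (x ^ e + 1 - (x + 1) ^ e) * v ^ e"
    by (simp only: power_mult_distrib) (simp add: algebra_simps)
  ultimately have "(x ^ e + 1 - (x + 1) ^ e) * v ^ e = 0" by simp
  then have "x ^ e + 1 - (x + 1) ^ e = 0" using assms(2) by simp
  then show "(u / v + 1) ^ e - (u / v) ^ e - 1 = 0" unfolding x_def[symmetric] by (simp add: algebra_simps)
  show "u / v \<noteq> 0" using assms by simp
qed

lemma L2:
  fixes u v w :: 'a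
  assumes "even e" "u \<noteq> 0" "v \<noteq> 0" "u \<noteq> v" "u + v + w = 0" "u ^ e + v ^ e + w ^ e = 0"
  shows "(u / v + 1) ^ e + (u / v) ^ e + 1 = 0" "u / v \<noteq> 0" "u / v \<noteq> 1"
proof -
  define x where "x = u / v"
  have u: "u = x * v" using assms by (simp add: x_def)
  have w: "w = - ((x + 1) * v)" using assms(5) u by (simp add: algebra_simps eq_neg_iff_add_eq_0)
  have "(x * v) ^ e + v ^ e + ((x + 1) * v) ^ e = 0" using assms(1,6) u w by simp
  moreover have "(x * v) ^ e + v ^ e + ((x + 1) * v) ^ e = (x ^ e + 1 + (x + 1) ^ e) * v ^ e"
    by (simp only: power_mult_distrib) (simp add: algebra_simps)
  ultimately have "(x ^ e + 1 + (x + 1) ^ e) * v ^ e = 0" by simp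
  then have "x ^ e + 1 + (x + 1) ^ e = 0" using assms(3) by simp
  then show "(u / v + 1) ^ e + (u / v) ^ e + 1 = 0" unfolding x_def[symmetric] by (simp add: algebra_simps)
  show "u / v \<noteq> 0" using assms by simp
  show "u / v \<noteq> 1" using assms by simp
qed

lemma w2:
  fixes u v a b :: 'a
  assumes "even e" "a = 1 \<or> a = -1" "b = 1 \<or> b = -1" "u \<noteq> 0" "v \<noteq> 0" "u \<noteq> v"
    "a * u + b * v = 0" "a * u ^ e + b * v ^ e = 0"
  shows False
proof -
  define s where "s = a * b"
  have s: "s = 1 \<or> s = -1" unfolding s_def by (rule sign_mult[OF assms(2,3)])
  have aa: "a * a = 1" by (rule sign_sq[OF assms(2)])
  have e1: "u + s * v = 0"
  proof -
    have "u + s * v = a * (a * u + b * v)" using aa by (simp add: s_def algebra_simps)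
    then show ?thesis using assms(7) by simp
  qed
  have e2: "u ^ e + s * v ^ e = 0"
  proof -
    have "u ^ e + s * v ^ e = a * (a * u ^ e + b * v ^ e)" using aa by (simp add: s_def algebra_simps)
    then show ?thesis using assms(8) by simp
  qed
  from s show False
  proof
    assume "s = 1"
    then have "u = - v" using e1 by (simp add: eq_neg_iff_add_eq_0)
    then have "2 * v ^ e = 0" using e2 \<open>s = 1\<close> assms(1) by simp
    then show False using two_ne assms(5) by simp
  next
    assume "s = -1"
    then have "u = v" using e1 by simp
    then show False using assms(6) by simp
  qed
qed

lemma w3:
  fixes u v w a b c :: 'a
  assumes "even e"
    and h2: "\<forall>x::'a. x \<noteq> 0 \<and> (x + 1) ^ e + x ^ e + 1 = 0 \<longrightarrow> x = 1"
    and h3: "\<forall>x::'a. (x + 1) ^ e - x ^ e - 1 = 0 \<longrightarrow> x = 0"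
    and "a = 1 \<or> a = -1" "b = 1 \<or> b = -1" "c = 1 \<or> c = -1"
    and "u \<noteq> 0" "v \<noteq> 0" "w \<noteq> 0" "u \<noteq> v" "u \<noteq> w" "v \<noteq> w"
    and "a * u + b * v + c * w = 0" "a * u ^ e + b * v ^ e + c * w ^ e = 0"
  shows False
proof -
  define s where "s = a * b"
  define t where "t = a * c"
  have s: "s = 1 \<or> s = -1" unfolding s_def by (rule sign_mult[OF assms(4,5)])
  have t: "t = 1 \<or> t = -1" unfolding t_def by (rule sign_mult[OF assms(4,6)])
  have aa: "a * a = 1" by (rule sign_sq[OF assms(4)])
  have e1: "u + s * v + t * w = 0"
  proof -
    have "u + s * v + t * w = a * (a * u + b * v + c * w)" using aa by (simp add: s_def t_def algebra_simps)
    then show ?thesis using assms(13) by simp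
  qed
  have e2: "u ^ e + s * v ^ e + t * w ^ e = 0"
  proof -
    have "u ^ e + s * v ^ e + t * w ^ e = a * (a * u ^ e + b * v ^ e + c * w ^ e)"
      using aa by (simp add: s_def t_def algebra_simps)
    then show ?thesis using assms(14) by simp
  qed
  have C3: "x + y - z = 0 \<Longrightarrow> x ^ e + y ^ e - z ^ e = 0 \<Longrightarrow> x \<noteq> 0 \<Longrightarrow> y \<noteq> 0 \<Longrightarrow> False"
    for x y z :: 'a
    using L3[where u=x and v=y and w=z] h3 by blast
  from s t consider "s = 1" "t = 1" | "s = 1" "t = -1" | "s = -1" "t = 1" | "s = -1" "t = -1"
    by blast
  then show False
  proof cases
    case 1
    then have "u + v + w = 0" "u ^ e + v ^ e + w ^ e = 0" using e1 e2 by simp_all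
    then show False using L2[where u=u and v=v and w=w] assms h2 by blast
  next
    case 2
    then have "u + v - w = 0" "u ^ e + v ^ e - w ^ e = 0" using e1 e2 by simp_all
    then show False using C3 assms by blast
  next
    case 3
    have "u + w - v = u + s * v + t * w" "u ^ e + w ^ e - v ^ e = u ^ e + s * v ^ e + t * w ^ e"
      using 3 by simp_all
    then have "u + w - v = 0" "u ^ e + w ^ e - v ^ e = 0" using e1 e2 by simp_all
    then show False using C3 assms by blast
  next
    case 4
    have "v + w - u = - (u + s * v + t * w)" "v ^ e + w ^ e - u ^ e = - (u ^ e + s * v ^ e + t * w ^ e)"
      using 4 by simp_all
    then have "v + w - u = 0" "v ^ e + w ^ e - u ^ e = 0" using e1 e2 by simp_all
    then show False using C3 assms by blast
  qed
qed

end


lemma two_sum_lessThan: "2 * (\<Sum>j<k. j) = k * (k - 1)" for k :: nat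
proof (induction k)
  case (Suc k)
  then show ?case by (cases k) (simp_all add: algebra_simps)
qed simp

context tern
begin

lemma alpha_pow_comm: "(\<alpha> ^ e) ^ i = (\<alpha> ^ i) ^ e"
  by (simp add: power_mult[symmetric] mult.commute)

lemma alpha_nz: "\<alpha> ^ i \<noteq> 0" using gen0 by simp

lemma alpha_ne: "i < n \<Longrightarrow> j < n \<Longrightarrow> i \<noteq> j \<Longrightarrow> \<alpha> ^ i \<noteq> \<alpha> ^ j"
  using inj_alpha unfolding inj_on_def by blast

lemma code_supp:
  assumes "c \<in> C" "i \<in> supp c"
  shows "i < n" "coeff c i = 1 \<or> coeff c i = -1"
proof -
  have g: "over_gf3 c" "degree c < n" using assms(1) code_iff by auto
  have nz: "coeff c i \<noteq> 0" using assms(2) by (simp add: supp_def)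
  show "i < n" using le_degree[OF nz] g by simp
  show "coeff c i = 1 \<or> coeff c i = -1" using sign g nz unfolding over_gf3_def by blast
qed

lemma code_sums:
  assumes "c \<in> C"
  shows "(\<Sum>i\<in>supp c. coeff c i * \<alpha> ^ i) = 0" "(\<Sum>i\<in>supp c. coeff c i * (\<alpha> ^ i) ^ e) = 0"
proof -
  have "poly c \<alpha> = 0" "poly c (\<alpha> ^ e) = 0" using assms code_iff by auto
  then show "(\<Sum>i\<in>supp c. coeff c i * \<alpha> ^ i) = 0" "(\<Sum>i\<in>supp c. coeff c i * (\<alpha> ^ i) ^ e) = 0"
    unfolding poly_supp alpha_pow_comm by simp_all
qed

lemma weight_ge4:
  assumes ev: "even e"
    and h2: "\<forall>x::'a. x \<noteq> 0 \<and> (x + 1) ^ e + x ^ e + 1 = 0 \<longrightarrow> x = 1"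
    and h3: "\<forall>x::'a. (x + 1) ^ e - x ^ e - 1 = 0 \<longrightarrow> x = 0"
    and c: "c \<in> C" "c \<noteq> 0"
  shows "hamming_weight c \<ge> 4"
proof (rule ccontr)
  assume "\<not> hamming_weight c \<ge> 4"
  then have lt: "card (supp c) < 4" by (simp add: hw_supp)
  have "supp c \<noteq> {}" using c supp_empty by blast
  then have "card (supp c) \<noteq> 0" using supp_finite[of c] by (simp add: card_gt_0_iff)
  with lt consider "card (supp c) = 1" | "card (supp c) = 2" | "card (supp c) = 3" by linarith
  then show False
  proof cases
    case 1
    then have "card (supp c) = Suc 0" by simp
    then obtain i where S: "supp c = {i}" unfolding card_1_singleton_iff by blast
    have "coeff c i * \<alpha> ^ i = 0" using code_sums(1)[OF c(1)] S by simp
    moreover have "coeff c i \<noteq> 0" using S by (auto simp: supp_def)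
    ultimately show False using gen0 by simp
  next
    case 2
    then obtain i j where S: "supp c = {i, j}" "i \<noteq> j" by (auto simp: card_2_iff)
    have ij: "i < n" "j < n" "coeff c i = 1 \<or> coeff c i = -1" "coeff c j = 1 \<or> coeff c j = -1"
      using code_supp[OF c(1)] S by auto
    have "coeff c i * \<alpha> ^ i + coeff c j * \<alpha> ^ j = 0" using code_sums(1)[OF c(1)] S by simp
    moreover have "coeff c i * (\<alpha> ^ i) ^ e + coeff c j * (\<alpha> ^ j) ^ e = 0"
      using code_sums(2)[OF c(1)] S by simp
    ultimately show False using w2[OF ev ij(3,4) alpha_nz alpha_nz alpha_ne[OF ij(1,2) S(2)]] by simp
  next
    case 3
    then have "card (supp c) = Suc 2" by simp
    then obtain i B where B: "supp c = insert i B" "i \<notin> B" "card B = 2"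
      unfolding card_Suc_eq by blast
    then obtain j k where jk: "B = {j, k}" "j \<noteq> k" by (auto simp: card_2_iff)
    have S: "supp c = {i, j, k}" "i \<noteq> j" "i \<noteq> k" "j \<noteq> k" using B jk by auto
    have ijk: "i < n" "j < n" "k < n" "coeff c i = 1 \<or> coeff c i = -1"
      "coeff c j = 1 \<or> coeff c j = -1" "coeff c k = 1 \<or> coeff c k = -1"
      using code_supp[OF c(1)] S by auto
    have e1: "coeff c i * \<alpha> ^ i + coeff c j * \<alpha> ^ j + coeff c k * \<alpha> ^ k = 0"
      using code_sums(1)[OF c(1)] S by (simp add: add.assoc)
    have e2: "coeff c i * (\<alpha> ^ i) ^ e + coeff c j * (\<alpha> ^ j) ^ e + coeff c k * (\<alpha> ^ k) ^ e = 0"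
      using code_sums(2)[OF c(1)] S by (simp add: add.assoc)
    show False
      using w3[OF ev h2 h3 ijk(4,5,6) alpha_nz alpha_nz alpha_nz
          alpha_ne[OF ijk(1,2) S(2)] alpha_ne[OF ijk(1,3) S(3)] alpha_ne[OF ijk(2,3) S(4)] e1 e2] .
  qed
qed

lemma word_gen:
  assumes "over_gf3 w" "w \<noteq> 0" "\<forall>t. coeff w t \<noteq> 0 \<longrightarrow> t \<in> T" "T \<subseteq> {..<n}" "card T \<le> k"
    "poly w \<alpha> = 0" "poly w (\<alpha> ^ e) = 0"
  shows "w \<in> C \<and> w \<noteq> 0 \<and> hamming_weight w \<le> k"
proof -
  have "degree w \<le> n - 1"
  proof (rule degree_le, intro allI impI)
    fix t assume "n - 1 < t"
    then have "t \<notin> T" using assms(4) by auto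
    then show "coeff w t = 0" using assms(3) by blast
  qed
  then have "degree w < n" using n_ge3 by simp
  then have "w \<in> C" using assms code_iff by simp
  moreover have "supp w \<subseteq> T" using assms(3) by (auto simp: supp_def)
  then have "card (supp w) \<le> card T"
    using assms(4) by (intro card_mono) (auto intro: finite_subset)
  ultimately show ?thesis using assms(2,5) by (simp add: hw_supp)
qed

lemma sub1: "(1::'a) \<in> prime_subfield" by (simp add: subfield_iff)
lemma subm1: "(-1::'a) \<in> prime_subfield" by (simp add: subfield_iff)

lemma word3:
  assumes ijk: "i < n" "j < n" "k < n" "i \<noteq> j" "i \<noteq> k" "j \<noteq> k"
    and c: "c = 1 \<or> c = (-1::'a)"
    and e1: "\<alpha> ^ i + \<alpha> ^ j + c * \<alpha> ^ k = 0"
    and e2: "(\<alpha> ^ i) ^ e + (\<alpha> ^ j) ^ e + c * (\<alpha> ^ k) ^ e = 0"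
  shows "\<exists>w. w \<in> C \<and> w \<noteq> 0 \<and> hamming_weight w \<le> 3"
proof -
  define w where "w = monom 1 i + monom 1 j + monom c k"
  have cw: "coeff w t = (if t = i then 1 else 0) + (if t = j then 1 else 0) + (if t = k then c else 0)" for t
    by (auto simp: w_def coeff_monom)
  have "c \<in> prime_subfield" using c sub1 subm1 by auto
  then have "over_gf3 w" unfolding w_def using sub1 by (intro over_gf3_add over_gf3_monom)
  moreover have "w \<noteq> 0"
  proof
    assume "w = 0"
    then have "coeff w i = 0" by simp
    then show False using cw[of i] ijk by simp
  qed
  moreover have "\<forall>t. coeff w t \<noteq> 0 \<longrightarrow> t \<in> {i, j, k}" using cw by auto
  moreover have "{i, j, k} \<subseteq> {..<n}" using ijk by auto
  moreover have "card {i, j, k} \<le> 3"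
    using card_length[of "[i, j, k]"] by simp
  moreover have "poly w \<alpha> = 0" using e1 by (simp add: w_def poly_monom)
  moreover have "poly w (\<alpha> ^ e) = 0" using e2 by (simp add: w_def poly_monom alpha_pow_comm)
  ultimately show ?thesis using word_gen by blast
qed

lemma word2:
  assumes "odd e"
  shows "\<exists>w. w \<in> C \<and> w \<noteq> 0 \<and> hamming_weight w \<le> 3"
proof -
  have "(-1::'a) \<noteq> 0" by simp
  then obtain i where i: "i < n" "\<alpha> ^ i = -1" using nonzero_alpha[of "-1"] by auto
  have i0: "i \<noteq> 0"
  proof
    assume "i = 0"
    then have "(-1::'a) = 1" using i by simp
    then show False using m1_ne_1 by blast
  qed
  define w where "w = monom (1::'a) i + monom 1 0"
  have cw: "coeff w t = (if t = i then 1 else 0) + (if t = 0 then 1 else 0)" for t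
    by (auto simp: w_def coeff_monom)
  have "over_gf3 w" unfolding w_def using sub1 by (intro over_gf3_add over_gf3_monom)
  moreover have "w \<noteq> 0"
  proof
    assume "w = 0"
    then have "coeff w i = 0" by simp
    then show False using cw[of i] i0 by simp
  qed
  moreover have "\<forall>t. coeff w t \<noteq> 0 \<longrightarrow> t \<in> {i, 0}" using cw by auto
  moreover have "{i, 0} \<subseteq> {..<n}" using i n_ge3 by auto
  moreover have "card {i, 0} \<le> 3"
    using card_length[of "[i, 0]"] by simp
  moreover have "poly w \<alpha> = 0" using i by (simp add: w_def poly_monom)
  moreover have "poly w (\<alpha> ^ e) = 0" using i assms by (simp add: w_def poly_monom alpha_pow_comm)
  ultimately show ?thesis using word_gen by blast
qed

end

definition phi :: "(nat \<times> nat) \<times> 'a \<times> 'a \<Rightarrow> 'a::comm_ring_1 poly" where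
  "phi d = (case d of ((j, i), (a, b)) \<Rightarrow> monom a i + monom b j)"

lemma phi_coeff: "coeff (phi ((j, i), (a, b))) t = (if t = i then a else 0) + (if t = j then b else 0)"
  by (auto simp: phi_def coeff_monom)

lemma phi_poly: "poly (phi ((j, i), (a, b))) x = a * x ^ i + b * x ^ j"
  by (simp add: phi_def poly_monom)

context char3
begin

lemma card_pm1: "card {1, -1::'a} = 2"
proof -
  have "card {1, -1::'a} = Suc (card {-1::'a})" by (rule card_insert_disjoint) (use two_ne in auto)
  then show ?thesis by simp
qed

lemma aux1:
  assumes "x \<noteq> (1::'a)" shows "x \<noteq> - (x + 1)"
proof
  assume h: "x = - (x + 1)"
  then have a: "x + (x + 1) = 0" by (simp add: eq_neg_iff_add_eq_0)
  have "x + x + x = (1 + 1 + 1) * x" by (simp add: distrib_right)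
  also have "(1 + 1 + 1 :: 'a) = 3" by simp
  finally have b: "x + x + x = 0" using three by simp
  have "x = (x + x + x) - (x + (x + 1)) + 1" by (simp add: algebra_simps)
  also have "\<dots> = 1" unfolding a b by simp
  finally have "x = 1" .
  then show False using assms by simp
qed

lemma aux2:
  assumes "x \<noteq> (1::'a)" shows "(1::'a) \<noteq> - (x + 1)"
proof
  assume h: "1 = - (x + 1)"
  then have a: "x + 1 + 1 = 0" by (simp add: eq_neg_iff_add_eq_0 algebra_simps)
  have "x = (x + 1 + 1) - (1 + 1 + 1) + 1" by (simp add: algebra_simps)
  also have "(1 + 1 + 1 :: 'a) = 3" by simp
  finally have "x = 1" using a three by simp
  then show False using assms by simp
qed

lemma pow_m1_even: "even e \<Longrightarrow> (-1::'a) ^ e = 1" by simp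

lemma two_pow_even:
  assumes "even e" shows "(1 + 1 :: 'a) ^ e = 1"
proof -
  have "(1 + 1 :: 'a) = -1" using two_eq by simp
  then have "(1 + 1 :: 'a) ^ e = (-1) ^ e" by (simp only:)
  also have "\<dots> = 1" using assms by simp
  finally show ?thesis .
qed

end

lemma other_elem: "a \<in> S \<Longrightarrow> S \<noteq> {a} \<Longrightarrow> \<exists>x. x \<in> S \<and> x \<noteq> a"
  by auto

context tern
begin

lemma card_sigma: "card (SIGMA j:{..<n}. {..<j}) = (\<Sum>j<n. j)"
  by simp

lemma big: "(n + 1) * (n + 1) < (\<Sum>j<n. j) * 4"
proof -
  have s: "2 * (\<Sum>j<n. j) = n * (n - 1)" by (rule two_sum_lessThan)
  have s2: "n * (n - 1) = n * n - n" by (simp add: diff_mult_distrib2)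
  have "8 * n \<le> n * n" using n_ge8 by (intro mult_le_mono1) 
  moreover have "(n + 1) * (n + 1) = n * n + 2 * n + 1" by (simp add: algebra_simps)
  ultimately show ?thesis using s s2 n_ge8 by linarith
qed

lemma card_pairs: "card (UNIV :: ('a \<times> 'a) set) = (n + 1) * (n + 1)"
proof -
  have "card (UNIV :: ('a \<times> 'a) set) = card (UNIV :: 'a set) * card (UNIV :: 'a set)"
    by (simp add: UNIV_Times_UNIV[symmetric] card_cartesian_product del: UNIV_Times_UNIV)
  then show ?thesis using card_q pow_n by simp
qed

abbreviation D :: "((nat \<times> nat) \<times> 'a \<times> 'a) set" where
  "D \<equiv> (SIGMA j:{..<n}. {..<j}) \<times> ({1, -1} \<times> {1, -1})"

lemma phi_inj: "inj_on phi D"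
proof (rule inj_onI)
  fix d1 d2 assume d1D: "d1 \<in> D" and d2D: "d2 \<in> D" and eq: "phi d1 = (phi d2 :: 'a poly)"
  obtain j i a b where d1: "d1 = ((j, i), (a, b))" by (metis prod.exhaust)
  obtain j' i' a' b' where d2: "d2 = ((j', i'), (a', b'))" by (metis prod.exhaust)
  have h: "i < j" "i' < j'" "a \<noteq> 0" "b \<noteq> 0" "a' \<noteq> 0" "b' \<noteq> 0"
    using d1D d2D d1 d2 by auto
  have c: "(if t = i then a else 0) + (if t = j then b else 0) =
           (if t = i' then a' else 0) + (if t = j' then b' else 0)" for t
    using arg_cong[OF eq, of "\<lambda>p. coeff p t"] d1 d2 by (simp add: phi_coeff)
  have p1: "i = i' \<or> i = j'" using c[of i] h by (auto split: if_splits)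
  have p2: "j = i' \<or> j = j'" using c[of j] h by (auto split: if_splits)
  have p3: "i' = i \<or> i' = j" using c[of i'] h by (auto split: if_splits)
  have p4: "j' = i \<or> j' = j" using c[of j'] h by (auto split: if_splits)
  have ii: "i = i'" "j = j'" using p1 p2 p3 p4 h(1,2) by arith+
  have "a = a'" using c[of i] ii h by simp
  moreover have "b = b'" using c[of j] ii h by simp
  ultimately show "d1 = d2" using d1 d2 ii by simp
qed

lemma exists_w4: "\<exists>w. w \<in> C \<and> w \<noteq> 0 \<and> hamming_weight w \<le> 4"
proof -
  let ?psi = "\<lambda>d. (poly (phi d) \<alpha>, poly (phi d) (\<alpha> ^ e))"
  have "card D = card (SIGMA j:{..<n}. {..<j}) * (card {1, -1::'a} * card {1, -1::'a})"
    by (simp only: card_cartesian_product)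
  then have cD: "card D = (\<Sum>j<n. j) * 4" by (simp only: card_sigma card_pm1)
  have "card (?psi ` D) \<le> card (UNIV :: ('a \<times> 'a) set)" by (rule card_mono) simp_all
  then have c1: "card (?psi ` D) \<le> (n + 1) * (n + 1)" by (simp only: card_pairs)
  have "card (?psi ` D) < card D" unfolding cD using c1 big by linarith
  then have "\<not> inj_on ?psi D" by (rule pigeonhole)
  then obtain d1 d2 where d: "d1 \<in> D" "d2 \<in> D" "d1 \<noteq> d2" "?psi d1 = ?psi d2"
    unfolding inj_on_def by blast
  obtain j i a b where d1: "d1 = ((j, i), (a, b))" by (metis prod.exhaust)
  obtain j' i' a' b' where d2: "d2 = ((j', i'), (a', b'))" by (metis prod.exhaust)
  have h: "i < j" "i' < j'" "j < n" "j' < n" "a \<in> {1, -1}" "b \<in> {1, -1}" "a' \<in> {1, -1}" "b' \<in> {1, -1}"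
    using d d1 d2 by auto
  define w where "w = phi d1 - phi d2"
  have "w \<noteq> 0" using phi_inj d unfolding inj_on_def w_def by auto
  moreover have "over_gf3 w"
  proof -
    have s: "a \<in> prime_subfield" "b \<in> prime_subfield" "a' \<in> prime_subfield" "b' \<in> prime_subfield"
      using h sub1 subm1 by auto
    show ?thesis unfolding w_def d1 d2 phi_def
      by (simp add: over_gf3_diff over_gf3_add over_gf3_monom s)
  qed
  moreover have "\<forall>t. coeff w t \<noteq> 0 \<longrightarrow> t \<in> {i, j, i', j'}"
    by (auto simp: w_def d1 d2 phi_coeff)
  moreover have "{i, j, i', j'} \<subseteq> {..<n}" using h by auto
  moreover have "card {i, j, i', j'} \<le> 4"
    using card_length[of "[i, j, i', j']"] by simp
  moreover have "poly w \<alpha> = 0" "poly w (\<alpha> ^ e) = 0" using d(4) by (simp_all add: w_def)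
  ultimately show ?thesis using word_gen by blast
qed

lemma min_weight:
  "Min {hamming_weight c |c. c \<in> C \<and> c \<noteq> 0} = 4 \<longleftrightarrow>
   (even e \<and> {x::'a. x \<noteq> 0 \<and> (x + 1) ^ e + x ^ e + 1 = 0} = {1} \<and>
    {x::'a. (x + 1) ^ e - x ^ e - 1 = 0} = {0})"
proof -
  let ?W = "{hamming_weight c |c. c \<in> C \<and> c \<noteq> 0}"
  have finW: "finite ?W"
  proof -
    have "?W = hamming_weight ` (C - {0})" by auto
    then show ?thesis using code_finite by simp
  qed
  have low: "Min ?W \<le> 3" if "\<exists>w. w \<in> C \<and> w \<noteq> 0 \<and> hamming_weight w \<le> 3"
  proof -
    from that obtain w where w: "w \<in> C" "w \<noteq> 0" "hamming_weight w \<le> 3" by blast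
    then have "hamming_weight w \<in> ?W" by blast
    with finW have "Min ?W \<le> hamming_weight w" by (rule Min_le)
    then show ?thesis using w(3) by simp
  qed
  have epos: "e > 0" using e_range1 by simp
  have z: "(0::'a) ^ e = 0" using epos by simp
  show ?thesis
  proof
    assume M: "Min ?W = 4"
    have ev: "even e"
    proof (rule ccontr)
      assume "odd e"
      then have "Min ?W \<le> 3" using low word2 by blast
      then show False using M by simp
    qed
    have s2: "{x::'a. x \<noteq> 0 \<and> (x + 1) ^ e + x ^ e + 1 = 0} = {1}"
    proof (rule ccontr)
      assume ne: "{x::'a. x \<noteq> 0 \<and> (x + 1) ^ e + x ^ e + 1 = 0} \<noteq> {1}"
      have "(1 + 1 :: 'a) ^ e + 1 ^ e + 1 = 1 + 1 + 1" using two_pow_even[OF ev] by simp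
      also have "(1 + 1 + 1 :: 'a) = 3" by simp
      finally have "(1::'a) \<in> {x::'a. x \<noteq> 0 \<and> (x + 1) ^ e + x ^ e + 1 = 0}" using three by simp
      then obtain x :: 'a where "x \<in> {x::'a. x \<noteq> 0 \<and> (x + 1) ^ e + x ^ e + 1 = 0}" "x \<noteq> 1"
        using other_elem[OF _ ne] by blast
      then have x: "x \<noteq> 0" "(x + 1) ^ e + x ^ e + 1 = 0" "x \<noteq> 1" by simp_all
      have xm1: "x + 1 \<noteq> 0"
      proof
        assume "x + 1 = 0"
        then have "x = -1" by (simp add: eq_neg_iff_add_eq_0)
        then have "(1::'a) + 1 = 0" using x(2) ev z by simp
        then show False using two_ne by simp
      qed
      obtain i where i: "i < n" "\<alpha> ^ i = x" using nonzero_alpha[OF x(1)] by auto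
      have nz: "- (x + 1) \<noteq> 0" using xm1 by (simp only: neg_equal_0_iff_equal not_False_eq_True)
      from nonzero_alpha[OF nz] obtain k where k0: "k < n" "- (x + 1) = \<alpha> ^ k" by blast
      then have k: "k < n" "\<alpha> ^ k = - (x + 1)" by simp_all
      have "i \<noteq> 0"
      proof
        assume "i = 0"
        then show False using i x(3) by simp
      qed
      moreover have "i \<noteq> k"
      proof
        assume "i = k"
        then have "x = - (x + 1)" using i(2) k(2) by simp
        then show False using aux1[OF x(3)] by blast
      qed
      moreover have "0 \<noteq> k"
      proof
        assume "0 = k"
        then have "(1::'a) = - (x + 1)" using k(2) by simp
        then show False using aux2[OF x(3)] by blast
      qed
      moreover have "\<alpha> ^ i + \<alpha> ^ 0 + 1 * \<alpha> ^ k = 0" using i k by simp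
      moreover have "(\<alpha> ^ i) ^ e + (\<alpha> ^ 0) ^ e + 1 * (\<alpha> ^ k) ^ e = 0"
      proof -
        have p: "(- (x + 1)) ^ e = (x + 1) ^ e" by (rule power_minus_even[OF ev])
        have "(\<alpha> ^ i) ^ e + (\<alpha> ^ 0) ^ e + 1 * (\<alpha> ^ k) ^ e = x ^ e + 1 + (x + 1) ^ e"
          unfolding i(2) k(2) p by simp
        also have "\<dots> = (x + 1) ^ e + x ^ e + 1" by (simp only: ac_simps)
        finally show ?thesis using x(2) by simp
      qed
      ultimately have "\<exists>w. w \<in> C \<and> w \<noteq> 0 \<and> hamming_weight w \<le> 3"
        using word3[of i 0 k 1] i k n_ge3 by simp
      then have "Min ?W \<le> 3" by (rule low)
      then show False using M by simp
    qed
    have s3: "{x::'a. (x + 1) ^ e - x ^ e - 1 = 0} = {0}"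
    proof (rule ccontr)
      assume ne: "{x::'a. (x + 1) ^ e - x ^ e - 1 = 0} \<noteq> {0}"
      have "(0::'a) \<in> {x::'a. (x + 1) ^ e - x ^ e - 1 = 0}" using epos by simp
      then obtain x :: 'a where "x \<in> {x::'a. (x + 1) ^ e - x ^ e - 1 = 0}" "x \<noteq> 0"
        using other_elem[OF _ ne] by blast
      then have x: "(x + 1) ^ e - x ^ e - 1 = 0" "x \<noteq> 0" by simp_all
      have xm1: "x + 1 \<noteq> 0"
      proof
        assume "x + 1 = 0"
        then have "x = -1" by (simp add: eq_neg_iff_add_eq_0)
        then have "- (1::'a) - 1 = 0" using x(1) ev z by simp
        then show False using two_ne by (simp add: algebra_simps)
      qed
      have x1: "x \<noteq> 1"
      proof
        assume "x = 1"
        then have a: "(1 + 1 :: 'a) ^ e - 1 - 1 = 0" using x(1) by simp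
        have "(1::'a) - 1 - 1 = 0" using a unfolding two_pow_even[OF ev] .
        then show False by simp
      qed
      obtain i where i: "i < n" "\<alpha> ^ i = x" using nonzero_alpha[OF x(2)] by auto
      obtain k where k: "k < n" "\<alpha> ^ k = x + 1" using nonzero_alpha[of "x + 1"] xm1 by auto
      have "i \<noteq> 0"
      proof
        assume "i = 0"
        then show False using i x1 by simp
      qed
      moreover have "i \<noteq> k"
      proof
        assume "i = k"
        then have "x = x + 1" using i(2) k(2) by simp
        then show False by simp
      qed
      moreover have "0 \<noteq> k"
      proof
        assume "0 = k"
        then have "(1::'a) = x + 1" using k(2) by simp
        then show False using x(2) by simp
      qed
      moreover have "\<alpha> ^ i + \<alpha> ^ 0 + (-1) * \<alpha> ^ k = 0" using i k by simp
      moreover have "(\<alpha> ^ i) ^ e + (\<alpha> ^ 0) ^ e + (-1) * (\<alpha> ^ k) ^ e = 0"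
      proof -
        have "(\<alpha> ^ i) ^ e + (\<alpha> ^ 0) ^ e + (-1) * (\<alpha> ^ k) ^ e = - ((x + 1) ^ e - x ^ e - 1)"
          unfolding i(2) k(2) by (simp add: algebra_simps)
        then show ?thesis using x(1) by simp
      qed
      ultimately have "\<exists>w. w \<in> C \<and> w \<noteq> 0 \<and> hamming_weight w \<le> 3"
        using word3[of i 0 k "-1"] i k n_ge3 by simp
      then have "Min ?W \<le> 3" by (rule low)
      then show False using M by simp
    qed
    show "even e \<and> {x::'a. x \<noteq> 0 \<and> (x + 1) ^ e + x ^ e + 1 = 0} = {1} \<and>
      {x::'a. (x + 1) ^ e - x ^ e - 1 = 0} = {0}" using ev s2 s3 by blast
  next
    assume conds: "even e \<and> {x::'a. x \<noteq> 0 \<and> (x + 1) ^ e + x ^ e + 1 = 0} = {1} \<and>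
      {x::'a. (x + 1) ^ e - x ^ e - 1 = 0} = {0}"
    then have ev: "even e" by blast
    have h2: "\<forall>x::'a. x \<noteq> 0 \<and> (x + 1) ^ e + x ^ e + 1 = 0 \<longrightarrow> x = 1"
      using conds by (auto simp: set_eq_iff)
    have h3: "\<forall>x::'a. (x + 1) ^ e - x ^ e - 1 = 0 \<longrightarrow> x = 0"
      using conds by (auto simp: set_eq_iff)
    obtain w where w: "w \<in> C" "w \<noteq> 0" "hamming_weight w \<le> 4" using exists_w4 by blast
    then have wW: "hamming_weight w \<in> ?W" by blast
    with finW have le: "Min ?W \<le> 4" using w(3) by (meson Min_le order_trans)
    have "?W \<noteq> {}" using wW by blast
    with finW have "Min ?W \<in> ?W" by (rule Min_in)
    then obtain c where c: "Min ?W = hamming_weight c" "c \<in> C" "c \<noteq> 0" by blast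
    have "hamming_weight c \<ge> 4" using weight_ge4[OF ev h2 h3 c(2,3)] .
    then show "Min ?W = 4" using le c(1) by simp
  qed
qed

end
theorem theorem1:
  fixes m e :: nat and \<alpha> :: "'a::{field,finite}"
  assumes m_pos: "m > 0"
    and card_q: "card (UNIV :: 'a set) = 3 ^ m"
    and gen: "\<alpha> \<noteq> 0" "(\<lambda>i. \<alpha> ^ i) ` {..<3 ^ m - 1} = UNIV - {0}"
    and e_range: "1 < e" "e < 3 ^ m - 1"
    and e_notin: "e \<notin> cyc_coset (3 ^ m - 1) 1"
    and e_len: "card (cyc_coset (3 ^ m - 1) e) = m"
  shows "has_params3 (cyclic_code3 (3 ^ m - 1) (min_poly3 \<alpha> * min_poly3 (\<alpha> ^ e)))
            (3 ^ m - 1) (3 ^ m - 1) (3 ^ m - 1 - 2 * m) 4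
         \<longleftrightarrow> (even e \<and>
              {x::'a. x \<noteq> 0 \<and> (x + 1) ^ e + x ^ e + 1 = 0} = {1} \<and>
              {x::'a. (x + 1) ^ e - x ^ e - 1 = 0} = {0})"
proof -
  have c3: "(3::'a) = 0"
  proof -
    have "of_nat (card (UNIV::'a set)) * (1::'a) = 0" by (rule card_mult_zero)
    then have "(3::'a) ^ m = 0" using card_q by simp
    then show ?thesis by simp
  qed
  interpret T: tern \<alpha> m e
    unfolding tern_def char3_def tern_axioms_def
    using c3 m_pos card_q gen e_range e_notin e_len by blast
  have "has_params3 (cyclic_code3 (3 ^ m - 1) (min_poly3 \<alpha> * min_poly3 (\<alpha> ^ e)))
            (3 ^ m - 1) (3 ^ m - 1) (3 ^ m - 1 - 2 * m) 4 \<longleftrightarrow>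
        Min {hamming_weight c |c. c \<in> T.C \<and> c \<noteq> 0} = 4"
    unfolding has_params3_def T.gpoly_def[symmetric] T.n_def[symmetric]
    using T.card_code by simp
  then show ?thesis using T.min_weight by simp
qed

end
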